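(* Let $p$ be an odd prime, $N\ge 2$ an odd integer, $q$ a power of $p$ and $m$ a positive integer with $q^m=p^{2js}$, where $s\ge 2$, $N\mid(p^j+1)$, and $j$ is the smallest positive integer with $N\mid (p^j+1)$. Let $\omega$ be a primitive element of $\mathbb{F}_{q^m}$, $\psi$ the canonical additive character of $\mathbb{F}_{q^m}$ and $\eta$ the quadratic character of $\mathbb{F}_{q^m}$. Then for every integer $c$, $$2\,\psi\Big(\omega^c \bigcup_{t=1}^{N-1}C_{2t}^{(2N,q^m)}\Big)-\psi\Big(\omega^c \bigcup_{t=1}^{N-1}C_t^{(N,q^m)}\Big)=\begin{cases}0, & \text{if } c\equiv 0 \pmod N,\\ \pm G_{q^m}(\eta),&\text{otherwise,}\end{cases}$$ where $\pm G_{q^m}(\eta)$ means the value is either $G_{q^m}(\eta)$ or $-G_{q^m}(\eta)$.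
   Context: For $M\mid q^m-1$ and an integer $i$, $C_i^{(M,q^m)}=\omega^i\langle\omega^M\rangle\subseteq\mathbb{F}_{q^m}^\ast$. The canonical additive character is $\psi(x)=e^{2\pi i\,\mathrm{Tr}_{q^m/p}(x)/p}$, and for a subset $A$, $\psi(A)=\sum_{x\in A}\psi(x)$. The quadratic Gauss sum is $G_{q^m}(\eta)=\sum_{x\in\mathbb{F}_{q^m}^\ast}\eta(x)\psi(x)$. *)

theory Defs
  imports "HOL-Analysis.Analysis"
begin

text \<open>Finite field F_{q^m} is modelled as a finite field type 'a with CARD('a) = q^m.\<close>

definition ext_degree :: "nat \<Rightarrow> 'a::{field,finite} itself \<Rightarrow> nat" where
  "ext_degree p T = (THE n. CARD('a) = p ^ n)"

definition abs_trace :: "nat \<Rightarrow> 'a::{field,finite} \<Rightarrow> 'a" where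
  "abs_trace p x = (\<Sum>i<ext_degree p TYPE('a). x ^ (p ^ i))"

text \<open>The trace lies in the prime field {of_nat k | k < p}; we read it as an integer in [0,p).\<close>
definition trace_nat :: "nat \<Rightarrow> 'a::{field,finite} \<Rightarrow> nat" where
  "trace_nat p x = (THE k. k < p \<and> of_nat k = abs_trace p x)"

definition can_add_char :: "nat \<Rightarrow> 'a::{field,finite} \<Rightarrow> complex" where
  "can_add_char p x = cis (2 * pi * real (trace_nat p x) / real p)"

definition char_sum :: "nat \<Rightarrow> 'a::{field,finite} set \<Rightarrow> complex" where
  "char_sum p A = (\<Sum>x\<in>A. can_add_char p x)"

definition primitive_elem :: "'a::{field,finite} \<Rightarrow> bool" where
  "primitive_elem w \<longleftrightarrow> w \<noteq> 0 \<and> (\<forall>x. x \<noteq> 0 \<longrightarrow> (\<exists>k::nat. x = w ^ k))"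

definition cyclotomic_class :: "'a::{field,finite} \<Rightarrow> nat \<Rightarrow> int \<Rightarrow> 'a set" where
  "cyclotomic_class w M i = {w powi (i + int M * k) | k::int. True}"

definition quad_char :: "'a::{field,finite} \<Rightarrow> complex" where
  "quad_char x = (if x = 0 then 0 else if (\<exists>y. x = y ^ 2) then 1 else -1)"

definition quad_gauss_sum :: "nat \<Rightarrow> 'a::{field,finite} itself \<Rightarrow> complex" where
  "quad_gauss_sum p T = (\<Sum>x\<in>(UNIV::'a set) - {0}. quad_char x * can_add_char p x)"

end

theory Submission imports Defs "HOL-Computational_Algebra.Primes" "HOL-Computational_Algebra.Polynomial" begin

lemma finite_field_pow_card:
  fixes x :: "'a :: {field,finite}"
  shows "x ^ CARD('a) = x"
proof (cases "x = 0")
  case False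
  have "x * (\<Prod>y\<in>UNIV-{0}. x * y) = x * x ^ (card (UNIV :: 'a set) - 1) * \<Prod>(UNIV-{0})"
    by (simp add: prod.distrib mult_ac)
  also have "x * x ^ (card (UNIV :: 'a set) - 1) = x ^ Suc (card (UNIV :: 'a set) - 1)"
    by (subst power_Suc) auto
  also have "Suc (card (UNIV :: 'a set) - 1) = card (UNIV :: 'a set)"
    using finite_UNIV_card_ge_0[where ?'a = 'a] by simp
  also have "(\<Prod>y\<in>UNIV-{0}. x * y) = (\<Prod>y\<in>UNIV-{0}. y)"
    by (rule prod.reindex_bij_witness[of _ "\<lambda>y. y / x" "\<lambda>y. x * y"]) (use False in auto)
  finally show ?thesis
    by simp
qed (use finite_UNIV_card_ge_0[where ?'a = 'a] in auto)

lemma char_dvd_card: "CHAR('a::{field,finite}) dvd CARD('a)"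
proof -
  have "(\<Sum>y\<in>(UNIV::'a set). y + 1) = (\<Sum>y\<in>UNIV. y)"
    by (rule sum.reindex_bij_witness[of _ "\<lambda>y. y - 1" "\<lambda>y. y + 1"]) auto
  hence "of_nat CARD('a) = (0::'a)"
    by (simp add: sum.distrib)
  thus ?thesis by (simp add: of_nat_eq_0_iff_char_dvd)
qed

locale gsetup =
  fixes p n :: nat and w :: "'a::{field,finite}"
  assumes prime_p: "prime p" and card_a: "CARD('a) = p ^ n" and n_pos: "0 < n"
    and prim: "primitive_elem w" and odd_p: "odd p"
begin

definition L :: nat where "L = p ^ n - 1"

lemma p_gt1: "p > 1" by (rule prime_gt_1_nat[OF prime_p])

lemma Q_gt1: "p ^ n > 1"
  by (rule one_less_power[OF p_gt1 n_pos])

lemma L_pos: "L > 0" using Q_gt1 by (simp add: L_def)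

lemma Q_eq: "p ^ n = L + 1" using Q_gt1 by (simp add: L_def)

lemma char_p: "CHAR('a) = p"
proof -
  have pos: "CHAR('a) > 0" by (rule finite_imp_CHAR_pos) simp
  have pr: "prime CHAR('a)" by (rule prime_CHAR_semidom[OF pos])
  have "CHAR('a) dvd p ^ n" using char_dvd_card[where 'a='a] card_a by simp
  hence "CHAR('a) dvd p" by (rule prime_dvd_power[OF pr])
  thus ?thesis by (rule primes_dvd_imp_eq[OF pr prime_p])
qed

lemma prime_char: "prime CHAR('a)" using char_p prime_p by simp

lemma of_nat_0_iff: "(of_nat k :: 'a) = 0 \<longleftrightarrow> p dvd k"
  by (simp add: of_nat_eq_0_iff_char_dvd char_p)

lemma of_nat_mod: "(of_nat k :: 'a) = of_nat (k mod p)"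
proof -
  have "k = k mod p + p * (k div p)" by simp
  hence "(of_nat k :: 'a) = of_nat (k mod p) + of_nat p * of_nat (k div p)"
    by (metis of_nat_add of_nat_mult)
  also have "(of_nat p :: 'a) = 0" using of_nat_0_iff by simp
  finally show ?thesis by simp
qed

lemma of_nat_inj_le:
  assumes ab: "a \<le> b" "b < p" "(of_nat a :: 'a) = of_nat b"
  shows "a = b"
proof -
  have "(of_nat b :: 'a) = of_nat a + of_nat (b - a)" using ab by (simp flip: of_nat_add)
  hence "(of_nat (b - a) :: 'a) = 0" using ab by simp
  hence "p dvd (b - a)" using of_nat_0_iff by simp
  moreover have "b - a < p" using ab by simp
  ultimately have "b - a = 0" by (cases "b - a = 0") (auto dest: dvd_imp_le)
  thus "a = b" using ab by simp
qed

lemma of_nat_inj_lt: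
  assumes "a < p" "b < p" "(of_nat a :: 'a) = of_nat b"
  shows "a = b"
proof (cases "a \<le> b")
  case True
  thus ?thesis using assms of_nat_inj_le by blast
next
  case False
  hence "b \<le> a" by simp
  thus ?thesis using assms of_nat_inj_le[of b a] by simp
qed

lemma of_nat_eq_mod:
  assumes "(of_nat a :: 'a) = of_nat b"
  shows "a mod p = b mod p"
proof -
  have "(of_nat (a mod p) :: 'a) = of_nat (b mod p)"
    using assms of_nat_mod[of a] of_nat_mod[of b] by simp
  thus ?thesis using p_gt1 by (intro of_nat_inj_lt) auto
qed

lemma frob: "(x + y :: 'a) ^ p = x ^ p + y ^ p"
  by (rule freshmans_dream[OF prime_char]) (simp add: char_p)

lemma frob_sum: "(sum f A :: 'a) ^ p = sum (\<lambda>i. f i ^ p) A"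
  by (rule freshmans_dream_sum[OF prime_char]) (simp add: char_p)

lemma frob_pow: "(x + y :: 'a) ^ (p ^ k) = x ^ (p ^ k) + y ^ (p ^ k)"
  by (rule freshmans_dream'[OF prime_char]) (simp add: char_p)

lemma of_nat_pow_p: "(of_nat k :: 'a) ^ p = of_nat k"
proof -
  have "(of_nat k :: 'a) ^ p = (\<Sum>i<k. (1::'a)) ^ p" by simp
  also have "\<dots> = (\<Sum>i<k. (1::'a) ^ p)" by (rule frob_sum)
  finally show ?thesis by simp
qed

lemma pow_card: "(x :: 'a) ^ (p ^ n) = x"
  using finite_field_pow_card[of x] card_a by simp

lemma w_nz: "w \<noteq> 0" using prim unfolding primitive_elem_def by blast

lemma nz_pow_L: "(x :: 'a) \<noteq> 0 \<Longrightarrow> x ^ L = 1"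
proof -
  assume "x \<noteq> 0"
  have "x * x ^ L = x * 1" using pow_card[of x] Q_eq by simp
  thus ?thesis using \<open>x \<noteq> 0\<close> by simp
qed

lemma w_L: "w ^ L = 1" using nz_pow_L w_nz .

lemma w_pow_mod: "w ^ k = w ^ (k mod L)"
proof -
  have "w ^ k = w ^ (L * (k div L) + k mod L)" by simp
  also have "\<dots> = (w ^ L) ^ (k div L) * w ^ (k mod L)" by (simp only: power_add power_mult)
  finally show ?thesis using w_L by simp
qed

lemma w_image: "(\<lambda>k. w ^ k) ` {..<L} = UNIV - {0}"
proof
  show "(\<lambda>k. w ^ k) ` {..<L} \<subseteq> UNIV - {0}" using w_nz by auto
  show "UNIV - {0} \<subseteq> (\<lambda>k. w ^ k) ` {..<L}"
  proof
    fix x :: 'a assume "x \<in> UNIV - {0}"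
    then obtain k :: nat where "x = w ^ k" using prim unfolding primitive_elem_def by blast
    hence "x = w ^ (k mod L)" using w_pow_mod by simp
    moreover have "k mod L < L" using L_pos by simp
    ultimately show "x \<in> (\<lambda>k. w ^ k) ` {..<L}" by blast
  qed
qed

lemma card_nz: "card (UNIV - {0::'a}) = L"
  using card_a by (simp add: card_Diff_singleton L_def)

lemma w_inj: "inj_on (\<lambda>k. w ^ k) {..<L}"
  by (rule eq_card_imp_inj_on) (simp_all add: w_image card_nz)

lemma w_pow_eq_iff: "w ^ a = w ^ b \<longleftrightarrow> a mod L = b mod L"
proof
  assume "w ^ a = w ^ b"
  hence "w ^ (a mod L) = w ^ (b mod L)" by (simp add: w_pow_mod[symmetric])
  thus "a mod L = b mod L" using w_inj L_pos unfolding inj_on_def by simp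
next
  assume "a mod L = b mod L"
  thus "w ^ a = w ^ b" using w_pow_mod[of a] w_pow_mod[of b] by simp
qed

abbreviation E :: "int \<Rightarrow> 'a" where "E l \<equiv> w powi l"

lemma E_add: "E (a + b) = E a * E b"
  by (rule power_int_add) (simp add: w_nz)

lemma E_nat: "E l = w ^ nat (l mod int L)"
proof -
  have "E l = E (int L * (l div int L) + l mod int L)" by simp
  also have "\<dots> = E (int L * (l div int L)) * E (l mod int L)" by (rule E_add)
  also have "E (int L * (l div int L)) = (E (int L)) powi (l div int L)" by (rule power_int_mult)
  also have "E (int L) = 1" using w_L by (simp only: power_int_of_nat)
  also have nn: "l mod int L \<ge> 0" using L_pos by simp
  hence "E (l mod int L) = E (int (nat (l mod int L)))" by simp
  also have "\<dots> = w ^ nat (l mod int L)" by (rule power_int_of_nat)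
  finally show ?thesis by simp
qed

lemma E_nz: "E l \<noteq> 0" using w_nz by simp

lemma E_eq_iff: "E a = E b \<longleftrightarrow> a mod int L = b mod int L"
proof -
  have ra: "nat (a mod int L) < L" using L_pos by (simp add: nat_less_iff)
  have rb: "nat (b mod int L) < L" using L_pos by (simp add: nat_less_iff)
  have "E a = E b \<longleftrightarrow> nat (a mod int L) mod L = nat (b mod int L) mod L"
    unfolding E_nat w_pow_eq_iff ..
  also have "\<dots> \<longleftrightarrow> nat (a mod int L) = nat (b mod int L)" using ra rb by simp
  also have "\<dots> \<longleftrightarrow> a mod int L = b mod int L" using L_pos by (auto simp add: nat_eq_iff2)
  finally show ?thesis .
qed

lemma E_mod: "E (l mod int L) = E l" unfolding E_eq_iff by simp

lemma E_bij: "bij_betw E {0..<int L} (UNIV - {0})"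
proof -
  have "inj_on E {0..<int L}"
    unfolding inj_on_def E_eq_iff by auto
  moreover have "E ` {0..<int L} = UNIV - {0}"
  proof
    show "E ` {0..<int L} \<subseteq> UNIV - {0}" using E_nz by auto
    show "UNIV - {0} \<subseteq> E ` {0..<int L}"
    proof
      fix x :: 'a assume "x \<in> UNIV - {0}"
      then obtain k where k: "k < L" "x = w ^ k" using w_image by blast
      show "x \<in> E ` {0..<int L}" using k by (intro image_eqI[of _ _ "int k"]) auto
    qed
  qed
  ultimately show ?thesis unfolding bij_betw_def by blast
qed

lemma sum_nz: "(\<Sum>x\<in>UNIV - {0::'a}. f x) = (\<Sum>l\<in>{0..<int L}. f (E l))"
  using sum.reindex_bij_betw[OF E_bij, of f] by simp


lemma ext_deg: "ext_degree p TYPE('a) = n"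
  unfolding ext_degree_def card_a
proof (rule the_equality)
  show "p ^ n = p ^ n" ..
  fix k assume "p ^ n = p ^ k"
  thus "k = n" using power_inject_exp[OF p_gt1] by metis
qed

abbreviation Tr :: "'a \<Rightarrow> 'a" where "Tr x \<equiv> abs_trace p x"

lemma Tr_def': "Tr x = (\<Sum>i<n. x ^ (p ^ i))"
  unfolding abs_trace_def ext_deg ..

lemma Tr_add: "Tr (x + y) = Tr x + Tr y"
  unfolding Tr_def' by (simp add: frob_pow sum.distrib)

lemma Tr_shift: "(\<Sum>i<n. x ^ (p ^ Suc i)) = Tr x"
proof -
  have a: "(\<Sum>i<Suc n. x ^ (p ^ i)) = x ^ (p ^ 0) + (\<Sum>i<n. x ^ (p ^ Suc i))"
    by (rule sum.lessThan_Suc_shift)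
  have b: "(\<Sum>i<Suc n. x ^ (p ^ i)) = (\<Sum>i<n. x ^ (p ^ i)) + x ^ (p ^ n)"
    by (rule sum.lessThan_Suc)
  have "x + (\<Sum>i<n. x ^ (p ^ Suc i)) = (\<Sum>i<n. x ^ (p ^ i)) + x" using a b pow_card[of x] by simp
  thus ?thesis unfolding Tr_def' by (simp add: add.commute)
qed

lemma Tr_pow: "Tr x ^ p = Tr x"
proof -
  have "Tr x ^ p = (\<Sum>i<n. (x ^ (p ^ i)) ^ p)" unfolding Tr_def' by (rule frob_sum)
  also have "\<dots> = (\<Sum>i<n. x ^ (p ^ Suc i))"
    by (intro sum.cong refl) (simp add: power_mult[symmetric] mult.commute)
  finally show ?thesis using Tr_shift by simp
qed

lemma Tr_pow_arg: "Tr (x ^ p) = Tr x"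
proof -
  have "Tr (x ^ p) = (\<Sum>i<n. (x ^ p) ^ (p ^ i))" unfolding Tr_def' ..
  also have "\<dots> = (\<Sum>i<n. x ^ (p ^ Suc i))"
    by (intro sum.cong refl) (simp add: power_mult[symmetric])
  finally show ?thesis using Tr_shift by simp
qed

lemma prime_field:
  assumes "(y :: 'a) ^ p = y"
  shows "\<exists>k<p. y = of_nat k"
proof -
  define P :: "'a poly" where "P = monom 1 p + (- monom 1 1)"
  have d1: "degree (- monom (1::'a) 1) = 1" by (simp add: degree_monom_eq)
  have dp: "degree (monom (1::'a) p) = p" by (simp add: degree_monom_eq)
  have "degree P = degree (monom (1::'a) p)" unfolding P_def
    by (rule degree_add_eq_left) (use d1 dp p_gt1 in simp)
  hence degP: "degree P = p" using dp by simp
  have P0: "P \<noteq> 0" using degP p_gt1 by auto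
  have roots: "{x. poly P x = 0} = {x. x ^ p = x}" by (auto simp: P_def poly_monom)
  have bound: "card {x. poly P x = 0} \<le> p" using card_poly_roots_bound[OF P0] degP by simp
  have fin: "finite {x::'a. poly P x = 0}" by simp
  have sub: "of_nat ` {..<p} \<subseteq> {x. poly P x = 0}" using of_nat_pow_p roots by auto
  have inj: "inj_on (of_nat :: nat \<Rightarrow> 'a) {..<p}" using of_nat_inj_lt unfolding inj_on_def by auto
  have cimg: "card (of_nat ` {..<p} :: 'a set) = p" using card_image[OF inj] by simp
  have "of_nat ` {..<p} = {x. poly P x = 0}"
    by (rule card_subset_eq[OF fin sub]) (use card_mono[OF fin sub] cimg bound in simp)
  moreover have "y \<in> {x. poly P x = 0}" using roots assms by simp
  ultimately show ?thesis by auto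
qed

lemma tn_ex: "\<exists>!k. k < p \<and> of_nat k = Tr x"
proof -
  obtain k where "k < p" "Tr x = of_nat k" using prime_field[OF Tr_pow] by blast
  show ?thesis
  proof (rule ex1I[of _ k])
    show "k < p \<and> of_nat k = Tr x" using \<open>k < p\<close> \<open>Tr x = of_nat k\<close> by simp
    fix k' assume "k' < p \<and> of_nat k' = Tr x"
    thus "k' = k" using \<open>k < p\<close> \<open>Tr x = of_nat k\<close> of_nat_inj_lt[of k' k] by simp
  qed
qed

lemma tn_prop: "trace_nat p x < p \<and> of_nat (trace_nat p x) = Tr x"
  unfolding trace_nat_def by (rule theI'[OF tn_ex])

definition zp :: complex where "zp = cis (2 * pi / real p)"

abbreviation psi :: "'a \<Rightarrow> complex" where "psi x \<equiv> can_add_char p x"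

lemma zp_pow: "zp ^ k = cis (2 * pi * real k / real p)"
proof -
  have "zp ^ k = cis (real k * (2 * pi / real p))" unfolding zp_def by (rule Complex.DeMoivre)
  also have "real k * (2 * pi / real p) = 2 * pi * real k / real p" by simp
  finally show ?thesis .
qed

lemma psi_eq: "psi x = zp ^ trace_nat p x"
  unfolding can_add_char_def zp_pow ..

lemma zp_p: "zp ^ p = 1"
proof -
  have "2 * pi * real p / real p = 2 * pi" using p_gt1 by simp
  thus ?thesis unfolding zp_pow by simp
qed

lemma zp_pow_mod: "zp ^ k = zp ^ (k mod p)"
proof -
  have "zp ^ k = zp ^ (p * (k div p) + k mod p)" by simp
  also have "\<dots> = (zp ^ p) ^ (k div p) * zp ^ (k mod p)" by (simp only: power_add power_mult)
  finally show ?thesis using zp_p by simp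
qed

lemma zp_pow_eq1:
  assumes "k < p" "zp ^ k = 1"
  shows "k = 0"
proof -
  have inj: "inj_on (\<lambda>k. cis (2 * pi * real k / real p)) {..<p}"
    using Complex.bij_betw_roots_unity[of p] p_gt1 by (simp add: bij_betw_def)
  have "cis (2 * pi * real k / real p) = cis (2 * pi * real 0 / real p)"
    using assms(2) unfolding zp_pow by simp
  from inj_onD[OF inj this] show ?thesis using assms(1) p_gt1 by simp
qed

lemma zp_nz: "zp \<noteq> 0" unfolding zp_def by simp

lemma psi_add: "psi (x + y) = psi x * psi y"
proof -
  have "of_nat (trace_nat p (x+y)) = (of_nat (trace_nat p x + trace_nat p y) :: 'a)"
    using tn_prop[of "x+y"] tn_prop[of x] tn_prop[of y] Tr_add by simp
  hence "trace_nat p (x+y) mod p = (trace_nat p x + trace_nat p y) mod p" by (rule of_nat_eq_mod)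
  hence "trace_nat p (x+y) = (trace_nat p x + trace_nat p y) mod p" using tn_prop[of "x+y"] by simp
  hence "zp ^ trace_nat p (x+y) = zp ^ (trace_nat p x + trace_nat p y)"
    using zp_pow_mod by metis
  thus ?thesis unfolding psi_eq by (simp add: power_add)
qed

lemma psi_nz: "psi x \<noteq> 0" unfolding psi_eq using zp_nz by simp

lemma psi_0: "psi 0 = 1"
proof -
  have "psi 0 * psi 0 = psi 0 * 1" using psi_add[of 0 0] by simp
  thus ?thesis using psi_nz[of 0] by (metis mult_left_cancel)
qed

lemma tn_of_Tr: "Tr x = Tr y \<Longrightarrow> trace_nat p x = trace_nat p y"
  unfolding trace_nat_def by simp

lemma psi_pow: "psi (x ^ p) = psi x"
  unfolding can_add_char_def using tn_of_Tr[OF Tr_pow_arg] by simp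

lemma psi_pow_iter: "psi (x ^ (p ^ k)) = psi x"
  by (induction k arbitrary: x) (simp_all add: power_mult psi_pow)

lemma psi_norm: "norm (psi x) = 1" unfolding psi_eq zp_def by (simp add: norm_power)

lemma psi_neg: "psi (- x) = cnj (psi x)"
proof -
  have a: "psi x * psi (-x) = 1" using psi_add[of x "-x"] psi_0 by simp
  have b: "psi x * cnj (psi x) = 1"
    using complex_norm_square[of "psi x"] psi_norm[of x] by simp
  show ?thesis using a b psi_nz[of x] by (metis mult_left_cancel)
qed

lemma psi_pow_p: "psi x ^ p = 1"
  unfolding psi_eq by (metis power_mult mult.commute power_one zp_p)

lemma Tr_nonzero: "\<exists>y. Tr y \<noteq> 0"
proof (rule ccontr)
  assume "\<not> (\<exists>y. Tr y \<noteq> 0)"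
  hence all0: "\<And>y. Tr y = 0" by simp
  define P :: "'a poly" where "P = (\<Sum>i<n. monom 1 (p ^ i))"
  have polyP: "poly P y = Tr y" for y unfolding P_def Tr_def' poly_sum poly_monom by simp
  have coeffP: "coeff P k = (\<Sum>i<n. if p ^ i = k then 1 else 0)" for k
    unfolding P_def coeff_sum by simp
  have "coeff P (p ^ (n-1)) = (\<Sum>i<n. if i = n - 1 then 1 else (0::'a))" unfolding coeffP
    by (intro sum.cong refl) (use power_inject_exp[OF p_gt1] in simp)
  also have "\<dots> = 1" using n_pos by simp
  finally have P0: "P \<noteq> 0" by auto
  have degP: "degree P \<le> p ^ (n-1)"
  proof (rule degree_le, intro allI impI)
    fix k assume k: "p ^ (n - 1) < k"
    have "\<And>i. i < n \<Longrightarrow> p ^ i \<noteq> k"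
    proof -
      fix i assume "i < n"
      hence "p ^ i \<le> p ^ (n-1)" using p_gt1 by (intro power_increasing) auto
      thus "p ^ i \<noteq> k" using k by simp
    qed
    thus "coeff P k = 0" unfolding coeffP by simp
  qed
  have "card {y. poly P y = 0} \<le> p ^ (n-1)" using card_poly_roots_bound[OF P0] degP by linarith
  moreover have "{y. poly P y = 0} = UNIV" using all0 polyP by auto
  ultimately have "p ^ n \<le> p ^ (n-1)" using card_a by simp
  moreover have "p ^ (n-1) < p ^ n" using p_gt1 n_pos by (simp add: power_strict_increasing_iff)
  ultimately show False by simp
qed

lemma psi_nontriv: "\<exists>y. psi y \<noteq> 1"
proof -
  obtain y where y: "Tr y \<noteq> 0" using Tr_nonzero by blast
  have "trace_nat p y \<noteq> 0"
  proof
    assume "trace_nat p y = 0"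
    hence "Tr y = 0" using tn_prop[of y] by simp
    thus False using y by simp
  qed
  hence "zp ^ trace_nat p y \<noteq> 1" using zp_pow_eq1[of "trace_nat p y"] tn_prop[of y] by auto
  thus ?thesis unfolding psi_eq by blast
qed

lemma psi_sum_UNIV: "(\<Sum>x\<in>UNIV. psi x) = 0"
proof -
  obtain y where y: "psi y \<noteq> 1" using psi_nontriv by blast
  have "(\<Sum>x\<in>UNIV. psi x) = (\<Sum>x\<in>UNIV. psi (x + y))"
    by (rule sum.reindex_bij_witness[of _ "\<lambda>x. x + y" "\<lambda>x. x - y"]) auto
  also have "\<dots> = psi y * (\<Sum>x\<in>UNIV. psi x)"
    by (simp add: psi_add sum_distrib_left mult.commute)
  finally have "(1 - psi y) * (\<Sum>x\<in>UNIV. psi x) = 0" by (simp add: algebra_simps)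
  thus ?thesis using y by simp
qed

lemma psi_sum_mult: "(\<Sum>x\<in>UNIV. psi (x * b)) = (if b = 0 then of_nat (p ^ n) else 0)"
proof (cases "b = 0")
  case True
  thus ?thesis using psi_0 card_a by simp
next
  case False
  have "(\<Sum>x\<in>UNIV. psi (x * b)) = (\<Sum>x\<in>UNIV. psi x)"
    by (rule sum.reindex_bij_witness[of _ "\<lambda>x. x / b" "\<lambda>x. x * b"]) (use False in auto)
  thus ?thesis using False psi_sum_UNIV by simp
qed

lemma psi_sum_E: "(\<Sum>l\<in>{0..<int L}. psi (E l * b)) = (if b = 0 then of_nat L else -1)"
proof -
  have "(\<Sum>x\<in>UNIV. psi (x * b)) = psi (0 * b) + (\<Sum>x\<in>UNIV - {0}. psi (x * b))"
    by (rule sum.remove) auto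
  hence "(\<Sum>x\<in>UNIV - {0}. psi (x * b)) = (if b = 0 then of_nat (p ^ n) else 0) - 1"
    using psi_sum_mult[of b] psi_0 by simp
  also have "(if b = 0 then of_nat (p ^ n) else 0) - 1 = (if b = 0 then of_nat L else (-1::complex))"
    using Q_eq by simp
  finally show ?thesis using sum_nz[of "\<lambda>x. psi (x * b)"] by simp
qed

lemma L_even: "even L"
  using odd_p unfolding L_def by simp

lemma qc_E: "quad_char (E l) = (if even l then 1 else -1)"
proof -
  have "(\<exists>y. E l = y ^ 2) \<longleftrightarrow> even l"
  proof
    assume "\<exists>y. E l = y ^ 2"
    then obtain y where y: "E l = y ^ 2" by blast
    hence "y \<noteq> 0" using E_nz[of l] by auto
    then obtain i where i: "y = E i" using E_bij unfolding bij_betw_def by auto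
    have eq: "E (i + i) = E i * E i" by (rule E_add)
    have "E l = E (i + i)" using y i eq by (simp only: power2_eq_square)
    hence "int L dvd l - (i + i)" unfolding E_eq_iff by (simp add: mod_eq_dvd_iff)
    moreover have "2 dvd int L" using L_even by simp
    ultimately have "2 dvd l - (i + i)" using dvd_trans by blast
    thus "even l" by presburger
  next
    assume "even l"
    then obtain i where li: "l = 2 * i" by (rule evenE)
    have "E (i + i) = E i * E i" by (rule E_add)
    hence "E l = (E i) ^ 2" using li by (simp add: power2_eq_square)
    thus "\<exists>y. E l = y ^ 2" by blast
  qed
  thus ?thesis unfolding quad_char_def using E_nz[of l] by simp
qed

end

lemma periodic_sum_affine:
  fixes f :: "int \<Rightarrow> 'b::comm_monoid_add" and M a b :: int
  assumes M: "M > 0" and per: "\<And>x. f x = f (x mod M)" and cop: "coprime a M"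
  shows "(\<Sum>x\<in>{0..<M}. f (a * x + b)) = (\<Sum>x\<in>{0..<M}. f x)"
proof -
  define g where "g x = (a * x + b) mod M" for x
  have inj: "inj_on g {0..<M}"
  proof (rule inj_onI)
    fix x y assume x: "x \<in> {0..<M}" and y: "y \<in> {0..<M}" and eq: "g x = g y"
    hence "M dvd (a * x + b) - (a * y + b)" unfolding g_def by (simp add: mod_eq_dvd_iff)
    hence "M dvd a * (x - y)" by (simp add: algebra_simps)
    moreover have "coprime M a" using cop by (simp add: coprime_commute)
    ultimately have "M dvd x - y" using coprime_dvd_mult_right_iff[of M a "x - y"] by simp
    hence "x mod M = y mod M" by (simp add: mod_eq_dvd_iff)
    thus "x = y" using x y by simp
  qed
  have sub: "g ` {0..<M} \<subseteq> {0..<M}" unfolding g_def using M by auto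
  have cg: "card (g ` {0..<M}) = card {0..<M}" by (rule card_image[OF inj])
  have img: "g ` {0..<M} = {0..<M}"
    by (rule card_subset_eq[OF _ sub]) (use cg in simp_all)
  have "(\<Sum>x\<in>{0..<M}. f (a * x + b)) = (\<Sum>x\<in>{0..<M}. f (g x))"
  proof (intro sum.cong refl)
    fix x show "f (a * x + b) = f (g x)" unfolding g_def by (rule per)
  qed
  also have "\<dots> = (\<Sum>x\<in>g ` {0..<M}. f x)" by (simp add: sum.reindex[OF inj])
  also have "\<dots> = (\<Sum>x\<in>{0..<M}. f x)" by (simp only: img)
  finally show ?thesis .
qed

lemma periodic_sum_shift:
  fixes f :: "int \<Rightarrow> 'b::comm_monoid_add" and M b :: int
  assumes M: "M > 0" and per: "\<And>x. f x = f (x mod M)"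
  shows "(\<Sum>x\<in>{0..<M}. f (x + b)) = (\<Sum>x\<in>{0..<M}. f x)"
  using periodic_sum_affine[where f=f and M=M and a=1 and b=b, OF M per] by simp

lemma cls:
  fixes N :: int
  assumes "c \<in> {0..<N}"
  shows "N dvd l - c \<longleftrightarrow> c = l mod N"
proof -
  have "N dvd l - c \<longleftrightarrow> l mod N = c mod N" by (simp add: mod_eq_dvd_iff)
  also have "c mod N = c" using assms by simp
  finally show ?thesis by auto
qed

locale gsetup2 = gsetup +
  fixes N j s :: nat
  assumes oddN: "odd N" and N2: "N \<ge> 2" and jpos: "j > 0" and n_eq: "n = 2 * j * s"
    and Ndvd: "N dvd p ^ j + 1"
begin

definition r :: nat where "r = p ^ j"
definition H :: int where "H = int L div 2"
definition qc :: "int \<Rightarrow> complex" where "qc l = (if even l then 1 else -1)"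
definition h :: "int \<Rightarrow> complex" where "h l = qc l * psi (E l)"
definition e :: "int \<Rightarrow> complex" where
  "e c = (\<Sum>l\<in>{0..<int L}. if int N dvd l - c then h l else 0)"

lemma s_pos: "s > 0" using n_pos n_eq by (cases s) auto

lemma odd_r: "odd r" unfolding r_def using odd_p by simp

lemma L_r: "int L = (int r ^ 2) ^ s - 1"
proof -
  have pr: "p ^ n = (r ^ 2) ^ s" unfolding r_def n_eq by (simp add: power_mult[symmetric] mult_ac)
  have e1: "int L = int (p ^ n) - 1" using Q_eq by simp
  have e2: "int (p ^ n) = (int r ^ 2) ^ s" unfolding pr by simp
  show ?thesis using e1 e2 by simp
qed

lemma ar1: "(int r + 1) * (int r - 1) dvd int L"
proof -
  have "(int r ^ 2) ^ s - 1 = (int r ^ 2 - 1) * (\<Sum>i<s. (int r ^ 2) ^ i)" by (rule power_diff_1_eq)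
  moreover have "int r ^ 2 - 1 = (int r + 1) * (int r - 1)" by (simp add: algebra_simps power2_eq_square)
  ultimately show ?thesis using L_r by simp
qed

lemma ar2: "int p - 1 dvd int r - 1"
proof -
  have "int p ^ j - 1 = (int p - 1) * (\<Sum>i<j. int p ^ i)" by (rule power_diff_1_eq)
  thus ?thesis unfolding r_def by simp
qed

lemma ar3: "2 * int N dvd int r + 1"
proof -
  have "int N dvd int (p ^ j + 1)" using Ndvd by (simp only: int_dvd_int_iff)
  hence a: "int N dvd int r + 1" unfolding r_def by (simp add: add.commute)
  have b: "2 dvd int r + 1" using odd_r by simp
  have c: "coprime 2 (int N)" using oddN by simp
  show ?thesis using divides_mult[OF b a c] .
qed

lemma ar4: "2 * int N * (int p - 1) dvd int L"
proof -
  have "2 * int N * (int p - 1) dvd (int r + 1) * (int r - 1)"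
    using ar3 ar2 by (rule mult_dvd_mono)
  thus ?thesis using ar1 dvd_trans by blast
qed

lemma ar5: "4 dvd int L"
proof -
  have "2 * 2 dvd (int r + 1) * (int r - 1)"
    using odd_r by (intro mult_dvd_mono) simp_all
  hence "2 * 2 dvd int L" using ar1 by (rule dvd_trans)
  thus ?thesis by simp
qed

lemma L_2H: "int L = 2 * H" unfolding H_def using L_even by simp

lemma H_even: "even H" using ar5 L_2H by presburger

lemma N_dvd_H: "int N dvd H"
proof -
  have "2 * int N dvd 2 * H" using ar4 L_2H by (metis dvd_mult_left mult.assoc)
  thus ?thesis by simp
qed

lemma N_dvd_L: "int N dvd int L" using N_dvd_H unfolding L_2H by (rule dvd_mult)

lemma H_range: "0 < H" "H < int L" using L_2H L_pos H_even by auto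

lemma N_pos: "int N > 0" using N2 by simp

lemma cop_Np: "coprime N p"
proof (rule coprimeI)
  fix c assume c1: "c dvd N" and c2: "c dvd p"
  have "p dvd p ^ j" using jpos by simp
  hence "c dvd p ^ j" using c2 by (rule dvd_trans[rotated])
  hence "c dvd 1" using c1 Ndvd by (metis dvd_add_right_iff dvd_trans)
  thus "is_unit c" by simp
qed

lemma cop_Nr: "coprime (int N) (int r)"
  using cop_Np unfolding r_def by (simp add: coprime_power_right_iff)

lemma cop_Np1: "coprime (int N) (int p - 1)"
proof (rule coprimeI)
  fix c assume c1: "c dvd int N" and c2: "c dvd int p - 1"
  have "int p - 1 dvd int r - 1" by (rule ar2)
  hence "c dvd int r - 1" using c2 by (rule dvd_trans[rotated])
  moreover have "int N dvd int r + 1" using ar3 by (rule dvd_mult_right)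
  hence "c dvd int r + 1" using c1 by (rule dvd_trans[rotated])
  ultimately have "c dvd (int r + 1) - (int r - 1)" by (rule dvd_diff[rotated])
  hence "c dvd 2" by simp
  moreover have "coprime (int N) 2" using oddN by simp
  ultimately show "is_unit c" using c1 coprime_common_divisor by blast
qed

lemma cop_rL: "coprime (int r) (int L)"
proof (rule coprimeI)
  fix c assume c1: "c dvd int r" and c2: "c dvd int L"
  have "int r dvd (int r ^ 2) ^ s" using s_pos by (simp add: power_mult[symmetric])
  hence "c dvd (int r ^ 2) ^ s" using c1 by (rule dvd_trans[rotated])
  hence "c dvd (int r ^ 2) ^ s - int L" using c2 by (rule dvd_diff)
  hence "c dvd 1" using L_r by simp
  thus "is_unit c" by simp
qed

lemma qc_add: "qc (a + b) = qc a * qc b" unfolding qc_def by auto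

lemma qc_sq: "qc a * qc a = 1" unfolding qc_def by auto

lemma qc_mod: "qc (x mod int L) = qc x"
proof -
  have "2 dvd int L" using L_even by simp
  hence "even (x mod int L) \<longleftrightarrow> even x" by (rule dvd_mod_iff)
  thus ?thesis unfolding qc_def by simp
qed

lemma h_mod: "h (x mod int L) = h x" unfolding h_def qc_mod E_mod ..

lemma dvd_mod_L: "int N dvd (x mod int L - c) \<longleftrightarrow> int N dvd (x - c)"
proof -
  have "int N dvd (x mod int L - c) \<longleftrightarrow> x mod int L mod int N = c mod int N"
    by (simp add: mod_eq_dvd_iff)
  also have "x mod int L mod int N = x mod int N" using N_dvd_L by (rule mod_mod_cancel)
  finally show ?thesis by (simp add: mod_eq_dvd_iff)
qed

lemma e_mod: "e (c mod int N) = e c"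
proof -
  have "\<And>l. int N dvd l - c mod int N \<longleftrightarrow> int N dvd l - c"
    by (simp add: mod_eq_dvd_iff[symmetric])
  thus ?thesis unfolding e_def by simp
qed

lemma G_eq: "quad_gauss_sum p TYPE('a) = (\<Sum>l\<in>{0..<int L}. h l)"
  unfolding quad_gauss_sum_def sum_nz h_def qc_E qc_def ..

lemma sum_e: "(\<Sum>c\<in>{0..<int N}. e c) = quad_gauss_sum p TYPE('a)"
proof -
  have "(\<Sum>c\<in>{0..<int N}. e c) = (\<Sum>l\<in>{0..<int L}. \<Sum>c\<in>{0..<int N}. if int N dvd l - c then h l else 0)"
    unfolding e_def by (rule sum.swap)
  also have "\<dots> = (\<Sum>l\<in>{0..<int L}. h l)"
  proof (intro sum.cong refl)
    fix l
    have "(\<Sum>c\<in>{0..<int N}. if int N dvd l - c then h l else 0) = (\<Sum>c\<in>{0..<int N}. if c = l mod int N then h l else 0)"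
      by (intro sum.cong refl) (simp add: cls)
    also have "\<dots> = h l" using N_pos by simp
    finally show "(\<Sum>c\<in>{0..<int N}. if int N dvd l - c then h l else 0) = h l" .
  qed
  finally show ?thesis using G_eq by simp
qed

end

context gsetup2
begin

lemma E_H: "E H = -1"
proof -
  have "E (H + H) = E H * E H" by (rule E_add)
  moreover have "H + H = int L" using L_2H by simp
  ultimately have "E H * E H = E (int L)" by simp
  also have "E (int L) = 1" using w_L by (simp only: power_int_of_nat)
  finally have sq: "E H * E H = 1" .
  have "E H \<noteq> E 0"
  proof
    assume "E H = E 0"
    hence "H mod int L = 0 mod int L" unfolding E_eq_iff .
    thus False using H_range by simp
  qed
  hence ne: "E H \<noteq> 1" by simp
  have pr: "(E H - 1) * (E H + 1) = 0" using sq by (simp add: algebra_simps)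
  have "E H - 1 \<noteq> 0" using ne by simp
  hence "E H + 1 = 0" using pr by simp
  thus ?thesis by (simp add: eq_neg_iff_add_eq_0)
qed

lemma E_eq_m1: "m \<in> {0..<int L} \<Longrightarrow> E m = -1 \<longleftrightarrow> m = H"
proof -
  assume m: "m \<in> {0..<int L}"
  have "E m = -1 \<longleftrightarrow> E m = E H" using E_H by simp
  also have "\<dots> \<longleftrightarrow> m mod int L = H mod int L" by (rule E_eq_iff)
  also have "\<dots> \<longleftrightarrow> m = H" using m H_range by simp
  finally show ?thesis .
qed

lemma qc_H: "qc H = 1" unfolding qc_def using H_even by simp

lemma qc_N: "qc (x + int N) = - qc x" unfolding qc_def using oddN by auto

lemma inner_c:
  "(\<Sum>c\<in>{0..<int N}. if int N dvd l - c \<and> int N dvd l' - (c + d) then X else 0)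
   = (if int N dvd l' - (l + d) then X else (0::complex))"
proof -
  have "(\<Sum>c\<in>{0..<int N}. if int N dvd l - c \<and> int N dvd l' - (c + d) then X else 0)
      = (\<Sum>c\<in>{0..<int N}. if c = l mod int N then (if int N dvd l' - (c + d) then X else 0) else 0)"
    by (intro sum.cong refl) (auto simp: cls)
  also have "\<dots> = (if int N dvd l' - (l mod int N + d) then X else 0)" using N_pos by simp
  finally have f1: "(\<Sum>c\<in>{0..<int N}. if int N dvd l - c \<and> int N dvd l' - (c + d) then X else 0)
     = (if int N dvd l' - (l mod int N + d) then X else 0)" .
  have "int N dvd l' - (l mod int N + d) \<longleftrightarrow> int N dvd l' - (l + d)"
  proof -
    have "l' - (l mod int N + d) = (l' - (l + d)) + (l div int N) * int N"
      using mod_div_mult_eq[of l "int N"] by (simp add: algebra_simps)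
    thus ?thesis by (simp only: dvd_add_times_triv_right_iff)
  qed
  thus ?thesis using f1 by simp
qed

lemma sum_qc_class: "(\<Sum>m\<in>{0..<int L}. if int N dvd m - d then qc m else 0) = 0"
proof -
  define f where "f m = (if int N dvd m - d then qc m else 0)" for m
  have per: "f x = f (x mod int L)" for x unfolding f_def using dvd_mod_L qc_mod by simp
  have "(\<Sum>m\<in>{0..<int L}. f (m + int N)) = (\<Sum>m\<in>{0..<int L}. f m)"
    by (rule periodic_sum_shift) (use L_pos per in auto)
  moreover have "f (m + int N) = - f m" for m
  proof -
    have "int N dvd m + int N - d \<longleftrightarrow> int N dvd m - d"
    proof -
      have "m + int N - d = (m - d) + 1 * int N" by simp
      thus ?thesis by (simp only: dvd_add_times_triv_right_iff)
    qed
    thus ?thesis unfolding f_def using qc_N by simp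
  qed
  ultimately have "(\<Sum>m\<in>{0..<int L}. - f m) = (\<Sum>m\<in>{0..<int L}. f m)" by simp
  hence "- (\<Sum>m\<in>{0..<int L}. f m) = (\<Sum>m\<in>{0..<int L}. f m)" by (simp add: sum_negf)
  hence "(\<Sum>m\<in>{0..<int L}. f m) + (\<Sum>m\<in>{0..<int L}. f m) = 0" by (metis add.left_inverse)
  hence "(\<Sum>m\<in>{0..<int L}. f m) = 0" by simp
  thus ?thesis unfolding f_def by simp
qed

lemma hh: "h l * h (x + l) = qc x * psi (E l * (1 + E x))"
proof -
  have "h l * h (x + l) = (qc l * qc (x + l)) * (psi (E l) * psi (E (x + l)))"
    unfolding h_def by (simp add: mult_ac)
  also have "qc l * qc (x + l) = qc x" unfolding qc_def by auto
  also have "psi (E l) * psi (E (x + l)) = psi (E l + E l * E x)"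
    using psi_add E_add[of x l] by (simp add: mult_ac)
  also have "E l + E l * E x = E l * (1 + E x)" by (simp add: algebra_simps)
  finally show ?thesis .
qed

lemma autocorr:
  "(\<Sum>c\<in>{0..<int N}. e c * e (c + d)) = (if int N dvd d then of_nat (p ^ n) else 0)"
proof -
  let ?I = "{0..<int L}" and ?C = "{0..<int N}"
  have "(\<Sum>c\<in>?C. e c * e (c + d))
      = (\<Sum>c\<in>?C. \<Sum>l\<in>?I. \<Sum>l'\<in>?I. if int N dvd l - c \<and> int N dvd l' - (c + d) then h l * h l' else 0)"
    unfolding e_def sum_product by (intro sum.cong refl) auto
  also have "\<dots> = (\<Sum>l\<in>?I. \<Sum>c\<in>?C. \<Sum>l'\<in>?I. if int N dvd l - c \<and> int N dvd l' - (c + d) then h l * h l' else 0)"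
    by (rule sum.swap)
  also have "\<dots> = (\<Sum>l\<in>?I. \<Sum>l'\<in>?I. \<Sum>c\<in>?C. if int N dvd l - c \<and> int N dvd l' - (c + d) then h l * h l' else 0)"
    by (rule sum.cong[OF refl], rule sum.swap)
  also have "\<dots> = (\<Sum>l\<in>?I. \<Sum>l'\<in>?I. if int N dvd l' - (l + d) then h l * h l' else 0)"
    by (simp only: inner_c)
  also have "\<dots> = (\<Sum>l\<in>?I. \<Sum>m\<in>?I. if int N dvd m - d then qc m * psi (E l * (1 + E m)) else 0)"
  proof (rule sum.cong[OF refl])
    fix l
    define f where "f l' = (if int N dvd l' - (l + d) then h l * h l' else 0)" for l'
    have per: "f x = f (x mod int L)" for x unfolding f_def using dvd_mod_L h_mod by simp
    have "(\<Sum>m\<in>?I. f (m + l)) = (\<Sum>l'\<in>?I. f l')"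
      by (rule periodic_sum_shift) (use L_pos per in auto)
    moreover have "f (m + l) = (if int N dvd m - d then qc m * psi (E l * (1 + E m)) else 0)" for m
      unfolding f_def hh by (simp add: algebra_simps)
    ultimately have "(\<Sum>l'\<in>?I. f l') = (\<Sum>m\<in>?I. if int N dvd m - d then qc m * psi (E l * (1 + E m)) else 0)"
      by simp
    thus "(\<Sum>l'\<in>?I. if int N dvd l' - (l + d) then h l * h l' else 0) = (\<Sum>m\<in>?I. if int N dvd m - d then qc m * psi (E l * (1 + E m)) else 0)"
      unfolding f_def by simp
  qed
  also have "\<dots> = (\<Sum>m\<in>?I. \<Sum>l\<in>?I. if int N dvd m - d then qc m * psi (E l * (1 + E m)) else 0)"
    by (rule sum.swap)
  also have "\<dots> = (\<Sum>m\<in>?I. if int N dvd m - d then qc m * (if 1 + E m = 0 then of_nat L else -1) else 0)"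
  proof (intro sum.cong refl)
    fix m
    show "(\<Sum>l\<in>?I. if int N dvd m - d then qc m * psi (E l * (1 + E m)) else 0)
        = (if int N dvd m - d then qc m * (if 1 + E m = 0 then of_nat L else -1) else 0)"
      by (cases "int N dvd m - d") (simp_all add: sum_distrib_left[symmetric] psi_sum_E)
  qed
  also have "\<dots> = (\<Sum>m\<in>?I. - (if int N dvd m - d then qc m else 0))
                 + (\<Sum>m\<in>?I. if m = H then (if int N dvd m - d then qc m * of_nat (p ^ n) else 0) else 0)"
  proof -
    have pt: "(if int N dvd m - d then qc m * (if 1 + E m = 0 then of_nat L else -1) else 0)
         = - (if int N dvd m - d then qc m else 0)
           + (if m = H then (if int N dvd m - d then qc m * of_nat (p ^ n) else 0) else 0)"
      if m: "m \<in> ?I" for m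
    proof -
      have "1 + E m = 0 \<longleftrightarrow> E m = - 1" by (simp add: add_eq_0_iff)
      hence "1 + E m = 0 \<longleftrightarrow> m = H" using E_eq_m1[OF m] by simp
      thus ?thesis using Q_eq by (auto simp: algebra_simps)
    qed
    have "(\<Sum>m\<in>?I. if int N dvd m - d then qc m * (if 1 + E m = 0 then of_nat L else -1) else 0)
      = (\<Sum>m\<in>?I. - (if int N dvd m - d then qc m else 0)
           + (if m = H then (if int N dvd m - d then qc m * of_nat (p ^ n) else 0) else 0))"
      by (rule sum.cong[OF refl], erule pt)
    thus ?thesis by (simp only: sum.distrib)
  qed
  also have "\<dots> = (if int N dvd H - d then qc H * of_nat (p ^ n) else 0)"
    using sum_qc_class[of d] H_range by (simp add: sum_negf)
  also have "\<dots> = (if int N dvd d then of_nat (p ^ n) else 0)"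
  proof -
    obtain t where t: "H = int N * t" using N_dvd_H by blast
    have "H - d = - d + t * int N" using t by simp
    hence "int N dvd H - d \<longleftrightarrow> int N dvd d" by (simp only: dvd_add_times_triv_right_iff dvd_minus_iff)
    thus ?thesis using qc_H by simp
  qed
  finally show ?thesis .
qed

lemma e_real: "cnj (e c) = e c"
proof -
  define g where "g x = (if int N dvd x - c then qc x * psi (E x) else 0)" for x
  have per: "g x = g (x mod int L)" for x unfolding g_def using dvd_mod_L qc_mod E_mod by simp
  have qc_r: "cnj (qc x) = qc x" for x unfolding qc_def by simp
  have "cnj (e c) = (\<Sum>l\<in>{0..<int L}. cnj (if int N dvd l - c then h l else 0))"
    unfolding e_def by simp
  also have "\<dots> = (\<Sum>l\<in>{0..<int L}. if int N dvd l - c then qc l * psi (- E l) else 0)"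
    by (intro sum.cong refl) (simp add: h_def psi_neg qc_r)
  also have "\<dots> = (\<Sum>l\<in>{0..<int L}. g (l + H))"
  proof (intro sum.cong refl)
    fix l
    have "E (l + H) = - E l" using E_add E_H by simp
    moreover have "int N dvd l + H - c \<longleftrightarrow> int N dvd l - c"
    proof -
      obtain t where t: "H = int N * t" using N_dvd_H by blast
      have "l + H - c = (l - c) + t * int N" using t by (simp add: algebra_simps)
      thus ?thesis by (simp only: dvd_add_times_triv_right_iff)
    qed
    moreover have "qc (l + H) = qc l" using qc_add qc_H by simp
    ultimately show "(if int N dvd l - c then qc l * psi (- E l) else 0) = g (l + H)"
      unfolding g_def by simp
  qed
  also have "\<dots> = (\<Sum>l\<in>{0..<int L}. g l)"
    by (rule periodic_sum_shift) (use L_pos per in auto)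
  also have "\<dots> = e c" unfolding g_def e_def h_def ..
  finally show ?thesis .
qed

lemma E_mult_nat: "E (x * int k) = E x ^ k"
  by (simp add: power_int_mult)

lemma e_r: "e (int r * c) = e c"
proof -
  define g where "g x = (if int N dvd x - int r * c then h x else 0)" for x
  have per: "g x = g (x mod int L)" for x unfolding g_def using dvd_mod_L h_mod by simp
  have "e (int r * c) = (\<Sum>x\<in>{0..<int L}. g x)" unfolding g_def e_def ..
  also have "\<dots> = (\<Sum>x\<in>{0..<int L}. g (int r * x + 0))"
    by (rule periodic_sum_affine[symmetric]) (use L_pos per cop_rL in auto)
  also have "\<dots> = e c" unfolding e_def
  proof (intro sum.cong refl)
    fix x
    have "int N dvd int r * x - int r * c \<longleftrightarrow> int N dvd int r * (x - c)" by (simp add: algebra_simps)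
    also have "\<dots> \<longleftrightarrow> int N dvd x - c" using cop_Nr by (simp add: coprime_dvd_mult_right_iff)
    finally have d: "int N dvd int r * x - int r * c \<longleftrightarrow> int N dvd x - c" .
    have "qc (int r * x) = qc x" unfolding qc_def using odd_r by simp
    moreover have "psi (E (int r * x)) = psi (E x)"
      using E_mult_nat[of x r] psi_pow_iter[of "E x" j] unfolding r_def by (simp add: mult.commute)
    ultimately have "h (int r * x) = h x" unfolding h_def by simp
    thus "g (int r * x + 0) = (if int N dvd x - c then h x else 0)" unfolding g_def using d by simp
  qed
  finally show ?thesis .
qed

lemma e_neg: "e (- c) = e c"
proof -
  have "(int r * c) mod int N = (- c) mod int N"
  proof -
    have "int r * c - (- c) = (int r + 1) * c" by (simp add: algebra_simps)
    moreover have "int N dvd (int r + 1) * c" using dvd_mult2[OF dvd_mult_right[OF ar3]] .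
    ultimately show ?thesis by (simp add: mod_eq_dvd_iff)
  qed
  hence "e (- c) = e (int r * c)" using e_mod by metis
  thus ?thesis using e_r by simp
qed

lemma psi_mult_nat: "psi (x * of_nat a) = psi x ^ a"
proof (induction a)
  case 0 thus ?case using psi_0 by simp
next
  case (Suc a)
  have "x * of_nat (Suc a) = x + x * of_nat a" by (simp add: algebra_simps)
  thus ?case using Suc psi_add by simp
qed

lemma ofnat_E:
  assumes "0 < a" "a < p"
  shows "\<exists>k. (of_nat a :: 'a) = E k \<and> 2 * int N dvd k"
proof -
  have nz: "(of_nat a :: 'a) \<noteq> 0" using assms of_nat_0_iff by (auto dest: dvd_imp_le)
  have "(of_nat a :: 'a) ^ Suc (p - 1) = of_nat a" using of_nat_pow_p[of a] p_gt1 by simp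
  hence "(of_nat a :: 'a) * (of_nat a) ^ (p - 1) = of_nat a * 1" by simp
  hence pw: "(of_nat a :: 'a) ^ (p - 1) = 1" using nz by simp
  have "(of_nat a :: 'a) \<in> E ` {0..<int L}" using nz E_bij unfolding bij_betw_def by simp
  then obtain k where k: "k \<in> {0..<int L}" "(of_nat a :: 'a) = E k" by blast
  have "E (k * int (p - 1)) = (E k) ^ (p - 1)" by (rule E_mult_nat)
  also have "\<dots> = 1" using pw k by simp
  finally have "E (k * int (p - 1)) = E 0" by simp
  hence "int L dvd k * int (p - 1)" unfolding E_eq_iff by (simp add: dvd_eq_mod_eq_0)
  moreover have "int (p - 1) = int p - 1" using p_gt1 by simp
  ultimately have "int L dvd k * (int p - 1)" by simp
  hence "2 * int N * (int p - 1) dvd k * (int p - 1)" using ar4 by (rule dvd_trans[rotated])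
  hence "2 * int N dvd k" using p_gt1 by simp
  thus ?thesis using k by blast
qed

lemma geo_p: "(\<Sum>a\<in>{1..<p}. psi x ^ a) = (if psi x = 1 then of_nat p - 1 else -1)"
proof -
  have "{0..<p} = insert 0 {1..<p}" using p_gt1 by auto
  hence split: "(\<Sum>a\<in>{0..<p}. psi x ^ a) = 1 + (\<Sum>a\<in>{1..<p}. psi x ^ a)" by simp
  show ?thesis
  proof (cases "psi x = 1")
    case True thus ?thesis using split by simp
  next
    case False
    have "(\<Sum>a<p. psi x ^ a) = (psi x ^ p - 1) / (psi x - 1)" by (rule geometric_sum[OF False])
    hence "(\<Sum>a\<in>{0..<p}. psi x ^ a) = 0" using psi_pow_p by (simp add: atLeast0LessThan)
    hence "(\<Sum>a\<in>{1..<p}. psi x ^ a) + 1 = 0" using split by (simp add: add.commute)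
    thus ?thesis using False by (simp add: eq_neg_iff_add_eq_0)
  qed
qed

lemma e_int: "\<exists>z::int. of_nat (p - 1) * e c = of_int z"
proof -
  have "\<forall>a\<in>{1..<p}. \<exists>k. (of_nat a :: 'a) = E k \<and> 2 * int N dvd k" using ofnat_E by auto
  from bchoice[OF this] obtain K where K0: "\<forall>a\<in>{1..<p}. (of_nat a :: 'a) = E (K a) \<and> 2 * int N dvd K a"
    by blast
  have K: "(of_nat a :: 'a) = E (K a) \<and> 2 * int N dvd K a" if "a \<in> {1..<p}" for a
    using K0 that by blast
  define g where "g x = (if int N dvd x - c then qc x * psi (E x) else 0)" for x
  have per: "g x = g (x mod int L)" for x unfolding g_def using dvd_mod_L qc_mod E_mod by simp
  have ea: "e c = (\<Sum>l\<in>{0..<int L}. if int N dvd l - c then qc l * psi (E l) ^ a else 0)"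
    if a: "a \<in> {1..<p}" for a
  proof -
    have "e c = (\<Sum>l\<in>{0..<int L}. g l)" unfolding g_def e_def h_def ..
    also have "\<dots> = (\<Sum>l\<in>{0..<int L}. g (l + K a))"
      by (rule periodic_sum_shift[symmetric]) (use L_pos per in auto)
    also have "\<dots> = (\<Sum>l\<in>{0..<int L}. if int N dvd l - c then qc l * psi (E l) ^ a else 0)"
    proof (intro sum.cong refl)
      fix l
      obtain t where t: "K a = 2 * int N * t" using K[OF a] by blast
      have "int N dvd l + K a - c \<longleftrightarrow> int N dvd l - c"
      proof -
        have "l + K a - c = (l - c) + (2 * t) * int N" using t by (simp add: algebra_simps)
        thus ?thesis by (simp only: dvd_add_times_triv_right_iff)
      qed
      moreover have "qc (l + K a) = qc l" unfolding qc_def using t by auto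
      moreover have "E (l + K a) = E l * of_nat a" using E_add K[OF a] by simp
      ultimately show "g (l + K a) = (if int N dvd l - c then qc l * psi (E l) ^ a else 0)"
        unfolding g_def using psi_mult_nat by simp
    qed
    finally show ?thesis .
  qed
  have "of_nat (p - 1) * e c = (\<Sum>a\<in>{1..<p}. e c)" by simp
  also have "\<dots> = (\<Sum>a\<in>{1..<p}. \<Sum>l\<in>{0..<int L}. if int N dvd l - c then qc l * psi (E l) ^ a else 0)"
    by (intro sum.cong refl ea) auto
  also have "\<dots> = (\<Sum>l\<in>{0..<int L}. \<Sum>a\<in>{1..<p}. if int N dvd l - c then qc l * psi (E l) ^ a else 0)"
    by (rule sum.swap)
  also have "\<dots> = (\<Sum>l\<in>{0..<int L}. of_int (if int N dvd l - c then (if even l then 1 else -1) *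
                        (if psi (E l) = 1 then int p - 1 else -1) else 0))"
  proof (intro sum.cong refl)
    fix l
    have "(\<Sum>a\<in>{1..<p}. if int N dvd l - c then qc l * psi (E l) ^ a else 0)
        = (if int N dvd l - c then qc l * (\<Sum>a\<in>{1..<p}. psi (E l) ^ a) else 0)"
      by (cases "int N dvd l - c") (simp_all add: sum_distrib_left)
    also have "\<dots> = of_int (if int N dvd l - c then (if even l then 1 else -1) *
                        (if psi (E l) = 1 then int p - 1 else -1) else 0)"
      unfolding geo_p qc_def using p_gt1 by (simp add: of_nat_diff)
    finally show "(\<Sum>a\<in>{1..<p}. if int N dvd l - c then qc l * psi (E l) ^ a else 0)
        = of_int (if int N dvd l - c then (if even l then 1 else -1) *
                        (if psi (E l) = 1 then int p - 1 else -1) else 0)" .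
  qed
  also have "\<dots> = of_int (\<Sum>l\<in>{0..<int L}. (if int N dvd l - c then (if even l then 1 else -1) *
                        (if psi (E l) = 1 then int p - 1 else -1) else 0))"
    by simp
  finally show ?thesis by blast
qed

end

context gsetup2
begin

lemma int_split0: "(0::int) < M \<Longrightarrow> sum f {0..<M} = f 0 + sum f {1..<M}"
proof -
  assume M: "0 < M"
  have "{0..<M} = insert 0 {1..<M}" using M by auto
  thus ?thesis by simp
qed

definition Z :: "int \<Rightarrow> complex" where "Z x = cis (2 * pi * of_int x / real N)"

lemma Z_add: "Z (x + y) = Z x * Z y"
  unfolding Z_def cis_mult by (simp add: add_divide_distrib ring_distribs)

lemma Z_multN: "Z (int N * t) = 1"
proof -
  have "2 * pi * real_of_int (int N * t) / real N = 2 * pi * real_of_int t" using N2 by simp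
  thus ?thesis unfolding Z_def by simp
qed

lemma Z_mod: "Z (x mod int N) = Z x"
proof -
  have "Z x = Z (x mod int N + int N * (x div int N))" by simp
  also have "\<dots> = Z (x mod int N)" unfolding Z_add Z_multN by simp
  finally show ?thesis by simp
qed

lemma Z_0: "Z 0 = 1" unfolding Z_def by simp

lemma Z_cnj: "cnj (Z x) = Z (- x)" unfolding Z_def cis_cnj by simp

lemma Z_eq1: "Z x = 1 \<Longrightarrow> int N dvd x"
proof -
  assume "Z x = 1"
  hence "Re (Z x) = 1" by simp
  hence "cos (2 * pi * of_int x / real N) = 1" unfolding Z_def by simp
  then obtain m :: int where m: "2 * pi * of_int x / real N = of_int m * 2 * pi"
    unfolding cos_one_2pi_int by blast
  have "real_of_int x = real_of_int m * real N" using m pi_neq_zero N_pos by (simp add: field_simps)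
  hence "x = m * int N" by (metis of_int_eq_iff of_int_mult of_int_of_nat_eq)
  thus ?thesis by simp
qed

lemma sumZ: "(\<Sum>k\<in>{0..<int N}. Z (x * k)) = (if int N dvd x then of_nat N else 0)"
proof (cases "int N dvd x")
  case True
  then obtain t where t: "x = int N * t" by blast
  have "\<And>k. Z (x * k) = 1" using Z_multN t by (simp add: mult.assoc)
  thus ?thesis using True by simp
next
  case False
  define f where "f k = Z (x * k)" for k
  have per: "f k = f (k mod int N)" for k
    unfolding f_def by (metis Z_mod mod_mult_right_eq)
  have "(\<Sum>k\<in>{0..<int N}. f (k + 1)) = (\<Sum>k\<in>{0..<int N}. f k)"
    by (rule periodic_sum_shift) (use N_pos per in auto)
  moreover have "f (k + 1) = f k * Z x" for k unfolding f_def by (simp add: ring_distribs Z_add)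
  ultimately have "(\<Sum>k\<in>{0..<int N}. f k) * Z x = (\<Sum>k\<in>{0..<int N}. f k)"
    by (simp add: sum_distrib_right)
  hence "(\<Sum>k\<in>{0..<int N}. f k) * (Z x - 1) = 0" by (simp add: algebra_simps)
  moreover have "Z x \<noteq> 1" using False Z_eq1 by blast
  ultimately show ?thesis using False unfolding f_def by simp
qed

definition F :: "int \<Rightarrow> complex" where "F k = (\<Sum>c\<in>{0..<int N}. e c * Z (c * k))"

lemma F_cnj: "cnj (F k) = (\<Sum>c\<in>{0..<int N}. e c * Z (- (c * k)))"
  unfolding F_def by (simp add: e_real Z_cnj)

lemma F_real: "cnj (F k) = F k"
proof -
  define g where "g c = e c * Z (c * k)" for c
  have per: "g c = g (c mod int N)" for c
    unfolding g_def using e_mod Z_mod by (metis mod_mult_left_eq)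
  have "cnj (F k) = (\<Sum>c\<in>{0..<int N}. g ((- 1) * c + 0))"
    unfolding F_cnj g_def by (simp add: e_neg)
  also have "\<dots> = (\<Sum>c\<in>{0..<int N}. g c)"
    by (rule periodic_sum_affine) (use N_pos per in auto)
  also have "\<dots> = F k" unfolding F_def g_def ..
  finally show ?thesis .
qed

lemma F_sq: "F k * cnj (F k) = of_nat (p ^ n)"
proof -
  let ?C = "{0..<int N}"
  have "F k * cnj (F k) = (\<Sum>c\<in>?C. \<Sum>c'\<in>?C. e c * Z (c * k) * (e c' * Z (- (c' * k))))"
    unfolding F_cnj unfolding F_def sum_product ..
  also have "\<dots> = (\<Sum>c'\<in>?C. \<Sum>c\<in>?C. e c * Z (c * k) * (e c' * Z (- (c' * k))))"
    by (rule sum.swap)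
  also have "\<dots> = (\<Sum>c'\<in>?C. \<Sum>x\<in>?C. e c' * e (c' + x) * Z (x * k))"
  proof (rule sum.cong[OF refl])
    fix c'
    define f where "f c = e c * Z (c * k) * (e c' * Z (- (c' * k)))" for c
    have zz: "Z ((c - c') * k) = Z (c * k) * Z (- (c' * k))" for c
      using Z_add[of "c * k" "- (c' * k)"] by (simp add: algebra_simps)
    have fz: "f c = e c * e c' * Z ((c - c') * k)" for c
      unfolding f_def zz by (simp add: mult_ac)
    have per: "f c = f (c mod int N)" for c
    proof -
      have "Z ((c - c') * k) = Z ((c mod int N - c') * k)"
        by (metis Z_mod mod_diff_left_eq mod_mult_left_eq)
      thus ?thesis unfolding fz using e_mod by simp
    qed
    have "(\<Sum>x\<in>?C. f (x + c')) = (\<Sum>c\<in>?C. f c)"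
      by (rule periodic_sum_shift) (use N_pos per in auto)
    moreover have "f (x + c') = e c' * e (c' + x) * Z (x * k)" for x unfolding fz by (simp add: mult_ac add.commute)
    ultimately have "(\<Sum>c\<in>?C. f c) = (\<Sum>x\<in>?C. e c' * e (c' + x) * Z (x * k))" by simp
    thus "(\<Sum>c\<in>?C. e c * Z (c * k) * (e c' * Z (- (c' * k)))) = (\<Sum>x\<in>?C. e c' * e (c' + x) * Z (x * k))"
      unfolding f_def by simp
  qed
  also have "\<dots> = (\<Sum>x\<in>?C. Z (x * k) * (\<Sum>c'\<in>?C. e c' * e (c' + x)))"
    by (subst sum.swap) (simp add: sum_distrib_left mult_ac)
  also have "\<dots> = (\<Sum>x\<in>?C. if x = 0 then of_nat (p ^ n) else 0)"
  proof (intro sum.cong refl)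
    fix x assume x: "x \<in> ?C"
    have "int N dvd x \<longleftrightarrow> x = 0" using cls[OF x, of 0] by simp
    thus "Z (x * k) * (\<Sum>c'\<in>?C. e c' * e (c' + x)) = (if x = 0 then of_nat (p ^ n) else 0)"
      unfolding autocorr using Z_0 by simp
  qed
  also have "\<dots> = of_nat (p ^ n)" using N_pos by simp
  finally show ?thesis .
qed

definition R :: real where "R = real (p ^ (j * s))"

lemma R_sq: "R ^ 2 = real (p ^ n)"
  unfolding R_def n_eq by (simp add: power_mult[symmetric] mult_ac)

lemma R_pos: "R > 0" unfolding R_def using p_gt1 by simp

lemma real_of_real: "cnj z = z \<Longrightarrow> z = complex_of_real (Re z)"
proof -
  assume h: "cnj z = z"
  have "Im z = 0" using arg_cong[OF h, of Im] by simp
  thus ?thesis by (simp add: complex_eq_iff)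
qed

lemma F_pm: "F k = complex_of_real R \<or> F k = - complex_of_real R"
proof -
  have fr: "F k = complex_of_real (Re (F k))" using F_real by (rule real_of_real)
  obtain a where a: "F k = complex_of_real a" using fr by blast
  have "F k * F k = of_nat (p ^ n)" using F_sq[of k] F_real[of k] by simp
  hence "complex_of_real (a * a) = complex_of_real (real (p ^ n))" using a by simp
  hence "a * a = real (p ^ n)" by (rule of_real_eq_iff[THEN iffD1])
  hence "a ^ 2 = R ^ 2" unfolding R_sq by (simp add: power2_eq_square)
  hence "a = R \<or> a = - R" by (simp add: power2_eq_iff)
  thus ?thesis using a by auto
qed

lemma sum_F: "(\<Sum>k\<in>{0..<int N}. F k) = of_nat N * e 0"
proof -
  let ?C = "{0..<int N}"
  have "(\<Sum>k\<in>?C. F k) = (\<Sum>c\<in>?C. e c * (\<Sum>k\<in>?C. Z (c * k)))"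
    unfolding F_def by (subst sum.swap) (simp add: sum_distrib_left)
  also have "\<dots> = (\<Sum>c\<in>?C. if c = 0 then e c * of_nat N else 0)"
  proof (intro sum.cong refl)
    fix c assume c: "c \<in> ?C"
    have "int N dvd c \<longleftrightarrow> c = 0" using cls[OF c, of 0] by simp
    thus "e c * (\<Sum>k\<in>?C. Z (c * k)) = (if c = 0 then e c * of_nat N else 0)"
      unfolding sumZ by simp
  qed
  also have "\<dots> = e 0 * of_nat N" using N_pos by simp
  finally show ?thesis by (simp add: mult.commute)
qed

lemma e0_pm: "e 0 = complex_of_real R \<or> e 0 = - complex_of_real R"
proof -
  let ?C = "{0..<int N}"
  define \<sigma> where "\<sigma> k = (if F k = complex_of_real R then 1 else -1 :: int)" for k
  have Fs: "F k = of_int (\<sigma> k) * complex_of_real R" for k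
    using F_pm[of k] unfolding \<sigma>_def by auto
  define m where "m = (\<Sum>k\<in>?C. \<sigma> k)"
  have "of_nat N * e 0 = of_int m * complex_of_real R"
    unfolding sum_F[symmetric] m_def Fs by (simp add: sum_distrib_right)
  obtain z where z: "of_nat (p - 1) * e 0 = of_int z" using e_int by blast
  have Rn: "complex_of_real R = of_int (int p ^ (j * s))" unfolding R_def by simp
  have "of_int (int N * z) = (of_nat N * (of_nat (p - 1) * e 0) :: complex)" using z by simp
  also have "\<dots> = of_nat (p - 1) * (of_nat N * e 0)" by (simp add: mult_ac)
  also have "\<dots> = of_nat (p - 1) * (of_int m * complex_of_real R)"
    using \<open>of_nat N * e 0 = of_int m * complex_of_real R\<close> by simp
  also have "\<dots> = of_int ((int p - 1) * m * int p ^ (j * s))"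
    unfolding Rn using p_gt1 by (simp add: of_nat_diff mult.assoc)
  finally have eqz: "int N * z = (int p - 1) * m * int p ^ (j * s)" by (rule of_int_eq_iff[THEN iffD1])
  have "int N dvd (int p - 1) * m * int p ^ (j * s)" unfolding eqz[symmetric] by simp
  moreover have "coprime (int N) (int p ^ (j * s))"
    using cop_Np by (simp add: coprime_power_right_iff)
  ultimately have "int N dvd (int p - 1) * m" by (simp add: coprime_dvd_mult_left_iff)
  hence Nm: "int N dvd m" using cop_Np1 by (simp add: coprime_dvd_mult_right_iff)
  have "even (\<Sum>k\<in>?C. \<sigma> k + 1)" by (intro dvd_sum) (simp add: \<sigma>_def)
  hence "even (m + int N)" unfolding m_def by (simp add: sum.distrib)
  hence mo: "odd m" using oddN by simp
  have "\<bar>m\<bar> \<le> (\<Sum>k\<in>?C. \<bar>\<sigma> k\<bar>)" unfolding m_def by (rule sum_abs)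
  also have "\<dots> = int N"
  proof -
    have "\<bar>\<sigma> k\<bar> = 1" for k unfolding \<sigma>_def by simp
    thus ?thesis by simp
  qed
  finally have mb: "\<bar>m\<bar> \<le> int N" .
  obtain t where t: "m = int N * t" using Nm by blast
  have "t \<noteq> 0" using mo t by auto
  moreover have "\<bar>t\<bar> \<le> 1"
  proof (rule ccontr)
    assume "\<not> \<bar>t\<bar> \<le> 1"
    hence "int N * 2 \<le> int N * \<bar>t\<bar>" using N_pos by (intro mult_left_mono) auto
    hence "int N * 2 \<le> \<bar>m\<bar>" unfolding t abs_mult using N_pos by simp
    thus False using mb N_pos by simp
  qed
  ultimately have "t = 1 \<or> t = -1" by arith
  hence "of_nat N * e 0 = of_nat N * complex_of_real R \<or> of_nat N * e 0 = of_nat N * (- complex_of_real R)"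
    using \<open>of_nat N * e 0 = of_int m * complex_of_real R\<close> t by auto
  moreover have "(of_nat N :: complex) \<noteq> 0" using N2 by simp
  ultimately show ?thesis by (metis mult_left_cancel)
qed

lemma e_zero:
  assumes c: "c \<in> {1..<int N}"
  shows "e c = 0"
proof -
  let ?C = "{0..<int N}"
  have er: "e x = complex_of_real (Re (e x))" for x using e_real by (rule real_of_real)
  have ee: "e x * e x = complex_of_real (Re (e x) ^ 2)" for x
  proof -
    obtain a where a: "e x = complex_of_real a" using er by blast
    thus ?thesis by (simp add: power2_eq_square)
  qed
  have "(\<Sum>x\<in>?C. e x * e x) = of_nat (p ^ n)" using autocorr[of 0] by simp
  hence "(\<Sum>x\<in>?C. complex_of_real (Re (e x) ^ 2)) = of_nat (p ^ n)" by (simp only: ee)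
  hence "complex_of_real (\<Sum>x\<in>?C. Re (e x) ^ 2) = complex_of_real (real (p ^ n))" by simp
  hence s1: "(\<Sum>x\<in>?C. Re (e x) ^ 2) = R ^ 2" unfolding R_sq by (rule of_real_eq_iff[THEN iffD1])
  have "Re (e 0) ^ 2 = R ^ 2" using e0_pm by auto
  moreover have "(\<Sum>x\<in>?C. Re (e x) ^ 2) = Re (e 0) ^ 2 + (\<Sum>x\<in>{1..<int N}. Re (e x) ^ 2)"
    using N_pos by (rule int_split0)
  ultimately have "(\<Sum>x\<in>{1..<int N}. Re (e x) ^ 2) = 0" using s1 by simp
  hence "Re (e c) ^ 2 = 0" using c by (auto simp: sum_nonneg_eq_0_iff)
  hence "Re (e c) = 0" by simp
  thus ?thesis using er[of c] by simp
qed

lemma e_final: "e c = (if int N dvd c then quad_gauss_sum p TYPE('a) else 0)"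
proof -
  have G0: "quad_gauss_sum p TYPE('a) = e 0"
  proof -
    have "(\<Sum>x\<in>{0..<int N}. e x) = e 0 + (\<Sum>x\<in>{1..<int N}. e x)"
      using N_pos by (rule int_split0)
    also have "(\<Sum>x\<in>{1..<int N}. e x) = 0" using e_zero by simp
    finally show ?thesis using sum_e by simp
  qed
  show ?thesis
  proof (cases "int N dvd c")
    case True
    hence "c mod int N = 0" by simp
    thus ?thesis using e_mod[of c] G0 True by simp
  next
    case False
    hence "c mod int N \<noteq> 0" by (simp add: dvd_eq_mod_eq_0)
    moreover have "0 \<le> c mod int N" "c mod int N < int N" using N_pos by simp_all
    ultimately have "c mod int N \<in> {1..<int N}" by simp
    thus ?thesis using e_zero e_mod[of c] False by simp
  qed
qed

end

context gsetup2
begin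

lemma mem_cyc: "y \<in> cyclotomic_class w M i \<longleftrightarrow> (\<exists>k. y = E (i + int M * k))"
  unfolding cyclotomic_class_def by auto

lemma ar6: "2 * int N dvd int L" using ar4 by (rule dvd_mult_left)

lemma not_dvd_small: "t \<in> {1..N-1} \<Longrightarrow> \<not> int N dvd int t"
proof
  assume t: "t \<in> {1..N-1}" and d: "int N dvd int t"
  hence "N dvd t" by simp
  hence "N \<le> t" using t by (intro dvd_imp_le) auto
  thus False using t N2 by auto
qed

lemma S1_eq: "(\<lambda>x. E c * x) ` (\<Union>t\<in>{1..N-1}. cyclotomic_class w (2*N) (2 * int t))
  = E ` {l \<in> {0..<int L}. even (l - c) \<and> \<not> int N dvd (l - c)}"
proof (intro equalityI subsetI)
  fix x assume "x \<in> (\<lambda>x. E c * x) ` (\<Union>t\<in>{1..N-1}. cyclotomic_class w (2*N) (2 * int t))"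
  then obtain t y where t: "t \<in> {1..N-1}" and y: "y \<in> cyclotomic_class w (2*N) (2 * int t)"
    and xy: "x = E c * y" by blast
  from y obtain k where "y = E (2 * int t + int (2*N) * k)" unfolding mem_cyc by blast
  hence x: "x = E c * E (2 * int t + int (2*N) * k)" using xy by simp
  define a where "a = c + (2 * int t + int (2*N) * k)"
  define l where "l = a mod int L"
  define q where "q = a div int L"
  have xl: "x = E l" unfolding l_def E_mod a_def using x E_add by simp
  have lr: "l \<in> {0..<int L}" using L_pos unfolding l_def by simp
  obtain u where u: "int L = 2 * int N * u" using ar6 by blast
  have "l = a - int L * q" unfolding l_def q_def using mod_div_mult_eq[of a "int L"] by (simp add: algebra_simps)
  hence lc: "l - c = 2 * (int t + (k - u * q) * int N)" unfolding a_def u by (simp add: algebra_simps)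
  have ev: "even (l - c)" unfolding lc by simp
  have nd: "\<not> int N dvd (l - c)"
  proof
    assume "int N dvd (l - c)"
    hence "int N dvd 2 * (int t + (k - u * q) * int N)" unfolding lc .
    moreover have "coprime (int N) 2" using oddN by simp
    ultimately have "int N dvd int t + (k - u * q) * int N" by (metis coprime_dvd_mult_right_iff)
    hence "int N dvd int t" by simp
    thus False using not_dvd_small[OF t] by simp
  qed
  show "x \<in> E ` {l \<in> {0..<int L}. even (l - c) \<and> \<not> int N dvd (l - c)}"
    using xl lr ev nd by blast
next
  fix x assume "x \<in> E ` {l \<in> {0..<int L}. even (l - c) \<and> \<not> int N dvd (l - c)}"
  then obtain l where l: "even (l - c)" "\<not> int N dvd (l - c)" and x: "x = E l" by blast
  define k where "k = (l - c) div (2 * int N)"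
  define t0 where "t0 = (l - c) mod (2 * int N)"
  have lk: "l - c = 2 * int N * k + t0" unfolding k_def t0_def
    using div_mult_mod_eq[of "l - c" "2 * int N"] by (simp add: mult.commute)
  have t0r: "0 \<le> t0" "t0 < 2 * int N" using N_pos unfolding t0_def by simp_all
  have "2 dvd t0" unfolding t0_def using l(1) by (simp add: dvd_mod_iff)
  then obtain t1 where t1: "t0 = 2 * t1" by blast
  have "t1 \<noteq> 0"
  proof
    assume "t1 = 0"
    hence "l - c = int N * (2 * k)" using lk t1 by (simp add: mult_ac)
    thus False using l(2) by simp
  qed
  hence t1r: "1 \<le> t1" "t1 \<le> int N - 1" using t0r t1 by auto
  define t where "t = nat t1"
  have tt: "int t = t1" unfolding t_def using t1r by simp
  have tr: "t \<in> {1..N-1}" using t1r tt by auto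
  have "l = c + (2 * int t + int (2*N) * k)" using lk t1 tt by (simp add: algebra_simps)
  hence "x = E c * E (2 * int t + int (2*N) * k)" using x E_add by simp
  moreover have "E (2 * int t + int (2*N) * k) \<in> cyclotomic_class w (2*N) (2 * int t)"
    unfolding mem_cyc by blast
  ultimately show "x \<in> (\<lambda>x. E c * x) ` (\<Union>t\<in>{1..N-1}. cyclotomic_class w (2*N) (2 * int t))"
    using tr by blast
qed

lemma S2_eq: "(\<lambda>x. E c * x) ` (\<Union>t\<in>{1..N-1}. cyclotomic_class w N (int t))
  = E ` {l \<in> {0..<int L}. \<not> int N dvd (l - c)}"
proof (intro equalityI subsetI)
  fix x assume "x \<in> (\<lambda>x. E c * x) ` (\<Union>t\<in>{1..N-1}. cyclotomic_class w N (int t))"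
  then obtain t y where t: "t \<in> {1..N-1}" and y: "y \<in> cyclotomic_class w N (int t)"
    and xy: "x = E c * y" by blast
  from y obtain k where "y = E (int t + int N * k)" unfolding mem_cyc by blast
  hence x: "x = E c * E (int t + int N * k)" using xy by simp
  define a where "a = c + (int t + int N * k)"
  define l where "l = a mod int L"
  define q where "q = a div int L"
  have xl: "x = E l" unfolding l_def E_mod a_def using x E_add by simp
  have lr: "l \<in> {0..<int L}" using L_pos unfolding l_def by simp
  obtain u where u: "int L = int N * u" using N_dvd_L by blast
  have "l = a - int L * q" unfolding l_def q_def using mod_div_mult_eq[of a "int L"] by (simp add: algebra_simps)
  hence lc: "l - c = int t + (k - u * q) * int N" unfolding a_def u by (simp add: algebra_simps)
  have nd: "\<not> int N dvd (l - c)"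
  proof
    assume "int N dvd (l - c)"
    hence "int N dvd int t" unfolding lc by simp
    thus False using not_dvd_small[OF t] by simp
  qed
  show "x \<in> E ` {l \<in> {0..<int L}. \<not> int N dvd (l - c)}"
    using xl lr nd by blast
next
  fix x assume "x \<in> E ` {l \<in> {0..<int L}. \<not> int N dvd (l - c)}"
  then obtain l where l: "\<not> int N dvd (l - c)" and x: "x = E l" by blast
  define k where "k = (l - c) div int N"
  define t0 where "t0 = (l - c) mod int N"
  have lk: "l - c = int N * k + t0" unfolding k_def t0_def
    using div_mult_mod_eq[of "l - c" "int N"] by (simp add: mult.commute)
  have t0r: "0 \<le> t0" "t0 < int N" using N_pos unfolding t0_def by simp_all
  have "t0 \<noteq> 0"
  proof
    assume "t0 = 0"
    hence "l - c = int N * k" using lk by simp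
    thus False using l by simp
  qed
  hence t1r: "1 \<le> t0" "t0 \<le> int N - 1" using t0r by auto
  define t where "t = nat t0"
  have tt: "int t = t0" unfolding t_def using t1r by simp
  have tr: "t \<in> {1..N-1}" using t1r tt by auto
  have "l = c + (int t + int N * k)" using lk tt by (simp add: algebra_simps)
  hence "x = E c * E (int t + int N * k)" using x E_add by simp
  moreover have "E (int t + int N * k) \<in> cyclotomic_class w N (int t)"
    unfolding mem_cyc by blast
  ultimately show "x \<in> (\<lambda>x. E c * x) ` (\<Union>t\<in>{1..N-1}. cyclotomic_class w N (int t))"
    using tr by blast
qed

lemma char_sum_E:
  "char_sum p (E ` {l \<in> {0..<int L}. P l}) = (\<Sum>l\<in>{0..<int L}. if P l then psi (E l) else 0)"
proof -
  have "inj_on E {0..<int L}" using E_bij by (simp add: bij_betw_def)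
  hence inj: "inj_on E {l \<in> {0..<int L}. P l}" by (rule inj_on_subset) auto
  have "char_sum p (E ` {l \<in> {0..<int L}. P l}) = (\<Sum>l\<in>{l \<in> {0..<int L}. P l}. psi (E l))"
    unfolding char_sum_def by (subst sum.reindex[OF inj]) (simp only: comp_def)
  also have "\<dots> = (\<Sum>l\<in>{0..<int L}. if P l then psi (E l) else 0)"
    by (rule sum.inter_filter) simp
  finally show ?thesis .
qed

lemma V_eq:
  "2 * char_sum p ((\<lambda>x. w powi c * x) ` (\<Union>t\<in>{1..N-1}. cyclotomic_class w (2*N) (2 * int t)))
   - char_sum p ((\<lambda>x. w powi c * x) ` (\<Union>t\<in>{1..N-1}. cyclotomic_class w N (int t)))
   = qc c * (quad_gauss_sum p TYPE('a) - e c)"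
proof -
  let ?I = "{0..<int L}"
  have "2 * char_sum p ((\<lambda>x. w powi c * x) ` (\<Union>t\<in>{1..N-1}. cyclotomic_class w (2*N) (2 * int t)))
   - char_sum p ((\<lambda>x. w powi c * x) ` (\<Union>t\<in>{1..N-1}. cyclotomic_class w N (int t)))
   = 2 * (\<Sum>l\<in>?I. if even (l - c) \<and> \<not> int N dvd (l - c) then psi (E l) else 0)
     - (\<Sum>l\<in>?I. if \<not> int N dvd (l - c) then psi (E l) else 0)"
    unfolding S1_eq S2_eq char_sum_E ..
  also have "\<dots> = (\<Sum>l\<in>?I. 2 * (if even (l - c) \<and> \<not> int N dvd (l - c) then psi (E l) else 0)
     - (if \<not> int N dvd (l - c) then psi (E l) else 0))"
    by (simp add: sum_distrib_left sum_subtractf)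
  also have "\<dots> = (\<Sum>l\<in>?I. qc c * (if \<not> int N dvd (l - c) then h l else 0))"
  proof (intro sum.cong refl)
    fix l
    have "qc (l - c) = qc l * qc c"
      using qc_add[of l "- c"] unfolding qc_def by simp
    thus "2 * (if even (l - c) \<and> \<not> int N dvd (l - c) then psi (E l) else 0)
     - (if \<not> int N dvd (l - c) then psi (E l) else 0) = qc c * (if \<not> int N dvd (l - c) then h l else 0)"
      unfolding h_def qc_def by (auto simp: algebra_simps)
  qed
  also have "\<dots> = qc c * (\<Sum>l\<in>?I. if \<not> int N dvd (l - c) then h l else 0)"
    by (simp add: sum_distrib_left)
  also have "(\<Sum>l\<in>?I. if \<not> int N dvd (l - c) then h l else 0) = quad_gauss_sum p TYPE('a) - e c"
  proof -
    have "(\<Sum>l\<in>?I. h l) = (\<Sum>l\<in>?I. (if int N dvd (l - c) then h l else 0) + (if \<not> int N dvd (l - c) then h l else 0))"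
      by (intro sum.cong refl) simp
    thus ?thesis unfolding G_eq e_def by (simp add: sum.distrib)
  qed
  finally show ?thesis .
qed

lemma main:
  "(let V = 2 * char_sum p ((\<lambda>x. w powi c * x) ` (\<Union>t\<in>{1..N-1}. cyclotomic_class w (2*N) (2 * int t)))
                - char_sum p ((\<lambda>x. w powi c * x) ` (\<Union>t\<in>{1..N-1}. cyclotomic_class w N (int t)))
         in (if int N dvd c then V = 0
             else V = quad_gauss_sum p TYPE('a) \<or> V = - quad_gauss_sum p TYPE('a)))"
  unfolding Let_def V_eq e_final by (auto simp: qc_def)

end


theorem theorem5p2:
  fixes p N q m j s :: nat and w :: "'a::{field,finite}" and c :: int
  assumes "prime p" and "odd p"
    and "odd N" and "N \<ge> 2"
    and "\<exists>e. q = p ^ e" and "m > 0"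
    and "CARD('a) = q ^ m" and "q ^ m = p ^ (2 * j * s)"
    and "s \<ge> 2"
    and "j > 0" and "N dvd p ^ j + 1"
    and "\<forall>j'. 0 < j' \<and> j' < j \<longrightarrow> \<not> N dvd p ^ j' + 1"
    and "primitive_elem w"
  shows "(let V = 2 * char_sum p ((\<lambda>x. w powi c * x) ` (\<Union>t\<in>{1..N-1}. cyclotomic_class w (2*N) (2 * int t)))
                - char_sum p ((\<lambda>x. w powi c * x) ` (\<Union>t\<in>{1..N-1}. cyclotomic_class w N (int t)))
         in (if int N dvd c then V = 0
             else V = quad_gauss_sum p TYPE('a) \<or> V = - quad_gauss_sum p TYPE('a)))"
proof -
  have card: "CARD('a) = p ^ (2 * j * s)" using assms(7,8) by simp
  have pos: "0 < 2 * j * s" using assms(9,10) by simp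
  interpret gsetup2 p "2 * j * s" w N j s
    by unfold_locales (use assms card pos in auto)
  show ?thesis by (rule main)
qed

end
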